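(* Let $F,G:[0,T]\to\mathbb{R}^{D\times D}$ be continuous. Let $\Psi(t,s)$ be the transition matrix of $F$, i.e. $\partial_t\Psi(t,s)=F_t\Psi(t,s)$ with $\Psi(s,s)=I_D$. Let $u_0\in\mathbb{R}^D$ and let $\Sigma_0$ be symmetric positive semidefinite. Let $\Sigma_t$ solve $\frac{d\Sigma_t}{dt}=F_t\Sigma_t+\Sigma_tF_t^T+G_tG_t^T$ with initial value $\Sigma_0$, and let $p_t=\mathcal{N}(\Psi(t,0)u_0,\Sigma_t)$, the time-$t$ marginal of $du=F_tu\,dt+G_t\,dw$ with $p_0=\mathcal{N}(u_0,\Sigma_0)$. Then for all $s,t\in[0,T]$ at which $\Sigma_s$ and $\Sigma_t$ are invertible, every point $u(s)\in\mathbb{R}^D$, and every $u\in\mathbb{R}^D$, $$\nabla\log p_t(u)=\Sigma_t^{-1}\Psi(t,s)\Sigma_s\nabla\log p_s(u(s))-\Sigma_t^{-1}\big[u-\Psi(t,s)u(s)\big].$$ *)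

theory Defs
  imports "HOL-Analysis.Analysis"
begin

definition gaussian_density :: "real^'n \<Rightarrow> real^'n^'n \<Rightarrow> real^'n \<Rightarrow> real" where
  "gaussian_density m S u =
     (2 * pi) powr (- real CARD('n) / 2) * det S powr (-1/2)
     * exp (- (1/2) * ((u - m) \<bullet> (matrix_inv S *v (u - m))))"

definition grad :: "(real^'n \<Rightarrow> real) \<Rightarrow> real^'n \<Rightarrow> real^'n" where
  "grad f x = (THE g. (f has_derivative (\<lambda>h. g \<bullet> h)) (at x))"

end

theory Submission imports Defs begin

lemma lin_ode_zero:
  fixes X :: "real \<Rightarrow> 'a::real_inner"
  assumes der: "\<And>r. r \<in> {0..T} \<Longrightarrow> (X has_vector_derivative D r) (at r within {0..T})"
    and bnd: "\<And>r. r \<in> {0..T} \<Longrightarrow> norm (D r) \<le> K * norm (X r)"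
    and K: "K \<ge> 0" and s: "s \<in> {0..T}" and X0: "X s = 0" and r: "r \<in> {0..T}"
  shows "X r = 0"
proof -
  have ip: "\<bar>X x \<bullet> D x\<bar> \<le> K * (X x \<bullet> X x)" if "x \<in> {0..T}" for x
  proof -
    have "\<bar>X x \<bullet> D x\<bar> \<le> norm (X x) * norm (D x)" by (rule Cauchy_Schwarz_ineq2)
    also have "\<dots> \<le> norm (X x) * (K * norm (X x))" using bnd[OF that] by (simp add: mult_left_mono)
    also have "\<dots> = K * (X x \<bullet> X x)" by (simp add: power2_norm_eq_inner[symmetric] power2_eq_square)
    finally show ?thesis .
  qed
  have dXX: "((\<lambda>x. X x \<bullet> X x) has_real_derivative (X x \<bullet> D x + D x \<bullet> X x)) (at x within S)"
    if "x \<in> {0..T}" "S \<subseteq> {0..T}" for x S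
  proof -
    have "(X has_vector_derivative D x) (at x within S)"
      using der[OF that(1)] that(2) by (rule has_vector_derivative_within_subset)
    from bounded_bilinear.has_vector_derivative[OF bounded_bilinear_inner this this]
    show ?thesis by (simp add: has_real_derivative_iff_has_vector_derivative)
  qed
  show ?thesis
  proof (cases "s \<le> r")
    case True
    define g where "g x = (X x \<bullet> X x) * exp (-2*K*(x-s))" for x
    define g' where "g' x = (X x \<bullet> D x + D x \<bullet> X x) * exp (-2*K*(x-s)) + (X x \<bullet> X x) * (exp (-2*K*(x-s)) * (-2*K))" for x
    have "(g has_derivative ((*) (g' x))) (at x within {s..r})" if "s \<le> x" "x \<le> r" for x
    proof -
      have "x \<in> {0..T}" "{s..r} \<subseteq> {0..T}" using that s r by auto
      from dXX[OF this] have "(g has_real_derivative g' x) (at x within {s..r})"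
        unfolding g_def g'_def by (auto intro!: derivative_eq_intros)
      then show ?thesis by (simp add: has_field_derivative_def)
    qed
    from mvt_very_simple[OF True this] obtain x where x: "x \<in> {s..r}" "g r - g s = g' x * (r - s)"
      by blast
    have x0T: "x \<in> {0..T}" using x s r by auto
    have "g' x = 2 * exp (-2*K*(x-s)) * (X x \<bullet> D x - K * (X x \<bullet> X x))"
      unfolding g'_def by (simp add: inner_commute algebra_simps)
    moreover from ip[OF x0T] have "X x \<bullet> D x - K * (X x \<bullet> X x) \<le> 0" by linarith
    ultimately have "g' x \<le> 0" by (simp add: mult_nonneg_nonpos)
    with x True have "g r \<le> 0" by (simp add: g_def X0 mult_nonpos_nonneg)
    then have "X r \<bullet> X r \<le> 0" unfolding g_def by (simp add: mult_le_0_iff)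
    then show ?thesis by (metis inner_gt_zero_iff not_less)
  next
    case False
    then have rs: "r \<le> s" by simp
    define g where "g x = (X x \<bullet> X x) * exp (2*K*(x-s))" for x
    define g' where "g' x = (X x \<bullet> D x + D x \<bullet> X x) * exp (2*K*(x-s)) + (X x \<bullet> X x) * (exp (2*K*(x-s)) * (2*K))" for x
    have "(g has_derivative ((*) (g' x))) (at x within {r..s})" if "r \<le> x" "x \<le> s" for x
    proof -
      have "x \<in> {0..T}" "{r..s} \<subseteq> {0..T}" using that s r by auto
      from dXX[OF this] have "(g has_real_derivative g' x) (at x within {r..s})"
        unfolding g_def g'_def by (auto intro!: derivative_eq_intros)
      then show ?thesis by (simp add: has_field_derivative_def)
    qed
    from mvt_very_simple[OF rs this] obtain x where x: "x \<in> {r..s}" "g s - g r = g' x * (s - r)"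
      by blast
    have x0T: "x \<in> {0..T}" using x s r by auto
    have "g' x = 2 * exp (2*K*(x-s)) * (X x \<bullet> D x + K * (X x \<bullet> X x))"
      unfolding g'_def by (simp add: inner_commute algebra_simps)
    moreover from ip[OF x0T] have "X x \<bullet> D x + K * (X x \<bullet> X x) \<ge> 0" by linarith
    ultimately have "g' x \<ge> 0" by simp
    moreover have "g' x * (s - r) \<ge> 0" using \<open>g' x \<ge> 0\<close> rs by simp
    then have "g s - g r \<ge> 0" using x(2) by linarith
    moreover have "g s = 0" by (simp add: g_def X0)
    ultimately have "g r \<le> 0" by linarith
    then have "X r \<bullet> X r \<le> 0" unfolding g_def by (simp add: mult_le_0_iff)
    then show ?thesis by (metis inner_gt_zero_iff not_less)
  qed
qed

lemma mm_add_r: "((A::real^'n^'m) + B) ** (C::real^'k^'n) = A ** C + B ** C"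
  by (simp add: vec_eq_iff matrix_matrix_mult_def sum.distrib algebra_simps)
lemma mm_diff_r: "((A::real^'n^'m) - B) ** (C::real^'k^'n) = A ** C - B ** C"
  by (simp add: vec_eq_iff matrix_matrix_mult_def sum_subtractf algebra_simps)
lemma mm_diff_l: "(A::real^'n^'m) ** ((B::real^'k^'n) - C) = A ** B - A ** C"
  by (simp add: vec_eq_iff matrix_matrix_mult_def sum_subtractf algebra_simps)
lemma mm_scaleR_r: "((c::real) *\<^sub>R (A::real^'n^'m)) ** (C::real^'k^'n) = c *\<^sub>R (A ** C)"
  by (simp add: vec_eq_iff matrix_matrix_mult_def sum_distrib_left algebra_simps)
lemma mm_scaleR_l: "(A::real^'n^'m) ** ((c::real) *\<^sub>R (C::real^'k^'n)) = c *\<^sub>R (A ** C)"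
  by (simp add: vec_eq_iff matrix_matrix_mult_def sum_distrib_left algebra_simps)
lemma tr_add: "transpose ((A::real^'n^'m) + B) = transpose A + transpose B"
  by (simp add: vec_eq_iff transpose_def)
lemma tr_diff: "transpose ((A::real^'n^'m) - B) = transpose A - transpose B"
  by (simp add: vec_eq_iff transpose_def)

lemma bb_mm: "bounded_bilinear (\<lambda>(A::real^'n^'m) (B::real^'k^'n). A ** B)"
  unfolding bilinear_conv_bounded_bilinear[symmetric] bilinear_def
  by (auto simp: linear_iff matrix_add_ldistrib mm_add_r mm_scaleR_r mm_scaleR_l)

lemma bl_tr: "bounded_linear (\<lambda>A::real^'n^'m. transpose A)"
  unfolding linear_conv_bounded_linear[symmetric]
  by (auto simp: linear_iff tr_add transpose_scalar)

lemma matrix_inv_props: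
  fixes A :: "real^'n^'n"
  assumes "invertible A"
  shows "A ** matrix_inv A = mat 1" "matrix_inv A ** A = mat 1"
proof -
  from assms obtain B :: "real^'n^'n" where "A ** B = mat 1 \<and> B ** A = mat 1"
    unfolding invertible_def by blast
  then have "A ** matrix_inv A = mat 1 \<and> matrix_inv A ** A = mat 1"
    unfolding matrix_inv_def by (rule someI)
  then show "A ** matrix_inv A = mat 1" "matrix_inv A ** A = mat 1" by auto
qed

lemma matrix_inv_sym:
  fixes S :: "real^'n^'n"
  assumes "invertible S" "transpose S = S"
  shows "transpose (matrix_inv S) = matrix_inv S"
proof -
  let ?A = "matrix_inv S"
  have "transpose ?A ** S = mat 1"
    by (metis assms(2) matrix_inv_props(1)[OF assms(1)] matrix_transpose_mul transpose_mat)
  then have "transpose ?A = transpose ?A ** (S ** ?A)"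
    by (simp add: matrix_inv_props(1)[OF assms(1)] matrix_mul_rid)
  also have "\<dots> = ?A" using \<open>transpose ?A ** S = mat 1\<close>
    by (simp add: matrix_mul_assoc matrix_mul_lid)
  finally show ?thesis .
qed

lemma grad_eqI:
  assumes "(f has_derivative (\<lambda>h. g \<bullet> h)) (at x)"
  shows "grad f x = g"
  unfolding grad_def
proof (rule the_equality)
  show "(f has_derivative (\<lambda>h. g \<bullet> h)) (at x)" by (rule assms)
next
  fix g' assume "(f has_derivative (\<lambda>h. g' \<bullet> h)) (at x)"
  from has_derivative_unique[OF this assms] have "\<And>h. g' \<bullet> h = g \<bullet> h" by metis
  then have "(g' - g) \<bullet> (g' - g) = 0" by (simp add: inner_diff_left)
  then show "g' = g" by simp
qed


lemma grad_gauss: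
  fixes S :: "real^'n^'n"
  assumes inv: "invertible S" and sym: "transpose S = S"
  shows "grad (\<lambda>v. ln (gaussian_density m S v)) u = matrix_inv S *v (m - u)"
proof -
  define A where "A = matrix_inv S"
  define c where "c = (2 * pi) powr (- real CARD('n) / 2) * det S powr (-1/2)"
  have "det S \<noteq> 0" using inv invertible_det_nz by blast
  then have cpos: "c > 0" unfolding c_def by simp
  have symA: "transpose A = A" unfolding A_def by (rule matrix_inv_sym[OF inv sym])
  have feq: "(\<lambda>v. ln (gaussian_density m S v)) = (\<lambda>v. ln c - (1/2) * ((v - m) \<bullet> (A *v (v - m))))"
  proof
    fix v
    have "gaussian_density m S v = c * exp (- (1/2) * ((v - m) \<bullet> (A *v (v - m))))"
      unfolding gaussian_density_def c_def A_def by simp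
    then show "ln (gaussian_density m S v) = ln c - (1/2) * ((v - m) \<bullet> (A *v (v - m)))"
      using cpos by (simp add: ln_mult)
  qed
  have d: "((\<lambda>v. (v - m) \<bullet> (A *v (v - m))) has_derivative
            (\<lambda>h. (v - m) \<bullet> (A *v h) + h \<bullet> (A *v (v - m)))) (at v)" for v
    by (auto intro!: derivative_eq_intros bounded_linear.has_derivative[OF matrix_vector_mul_bounded_linear])
  have key: "(v - m) \<bullet> (A *v h) = (A *v (v - m)) \<bullet> h" for v h
  proof -
    have "(v - m) \<bullet> (A *v h) = ((v - m) v* A) \<bullet> h" by (simp add: dot_lmul_matrix)
    also have "(v - m) v* A = transpose A *v (v - m)" by simp
    finally show ?thesis using symA by simp
  qed
  have "((\<lambda>v. ln c - (1/2) * ((v - m) \<bullet> (A *v (v - m)))) has_derivative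
          (\<lambda>h. 0 - (1/2) * ((u - m) \<bullet> (A *v h) + h \<bullet> (A *v (u - m))))) (at u)"
    by (intro derivative_intros d)
  moreover have "(\<lambda>h. 0 - (1/2) * ((u - m) \<bullet> (A *v h) + h \<bullet> (A *v (u - m)))) = (\<lambda>h. (A *v (m - u)) \<bullet> h)"
  proof
    fix h
    have "h \<bullet> (A *v (u - m)) = (A *v (u - m)) \<bullet> h" by (rule inner_commute)
    moreover have "A *v (m - u) = - (A *v (u - m))" by (simp add: matrix_vector_mult_diff_distrib)
    ultimately show "0 - (1/2) * ((u - m) \<bullet> (A *v h) + h \<bullet> (A *v (u - m))) = (A *v (m - u)) \<bullet> h"
      by (simp only: key) simp
  qed
  ultimately show ?thesis unfolding feq A_def by (simp add: grad_eqI)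
qed

theorem proposition5:
  fixes T :: real
    and F G :: "real \<Rightarrow> real^'n^'n"
    and Psi :: "real \<Rightarrow> real \<Rightarrow> real^'n^'n"
    and Sigma :: "real \<Rightarrow> real^'n^'n"
    and u0 :: "real^'n"
    and p :: "real \<Rightarrow> real^'n \<Rightarrow> real"
  assumes contF: "continuous_on {0..T} F"
    and contG: "continuous_on {0..T} G"
    and Psi_deriv: "\<And>s t. s \<in> {0..T} \<Longrightarrow> t \<in> {0..T} \<Longrightarrow>
        ((\<lambda>r. Psi r s) has_vector_derivative (F t ** Psi t s)) (at t within {0..T})"
    and Psi_init: "\<And>s. s \<in> {0..T} \<Longrightarrow> Psi s s = mat 1"
    and Sigma0_sym: "transpose (Sigma 0) = Sigma 0"
    and Sigma0_psd: "\<And>x. 0 \<le> x \<bullet> (Sigma 0 *v x)"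
    and Sigma_deriv: "\<And>t. t \<in> {0..T} \<Longrightarrow>
        (Sigma has_vector_derivative
           (F t ** Sigma t + Sigma t ** transpose (F t) + G t ** transpose (G t))) (at t within {0..T})"
    and p_def: "\<And>t. p t = gaussian_density (Psi t 0 *v u0) (Sigma t)"
    and s_in: "s \<in> {0..T}" and t_in: "t \<in> {0..T}"
    and inv_s: "invertible (Sigma s)" and inv_t: "invertible (Sigma t)"
  shows "grad (\<lambda>v. ln (p t v)) u =
           matrix_inv (Sigma t) *v (Psi t s *v (Sigma s *v grad (\<lambda>v. ln (p s v)) us))
           - matrix_inv (Sigma t) *v (u - Psi t s *v us)"
proof -
  have z0: "0 \<in> {0..T}" using s_in by auto
  obtain Kb where Kb: "Kb > 0" "\<And>(a :: real^'n^'n) (b :: real^'n^'n). norm (a ** b) \<le> norm a * norm b * Kb"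
    using bounded_bilinear.pos_bounded[OF bb_mm] by blast
  obtain Kt where Kt: "Kt > 0" "\<And>a :: real^'n^'n. norm (transpose a) \<le> norm a * Kt"
    using bounded_linear.pos_bounded[OF bl_tr] by blast
  have "bounded (F ` {0..T})"
    by (intro compact_imp_bounded compact_continuous_image contF compact_Icc)
  then obtain M where M: "M > 0" "\<And>r. r \<in> {0..T} \<Longrightarrow> norm (F r) \<le> M"
    unfolding bounded_pos by auto
  have bndF: "norm (F r ** Y) \<le> (M * Kb) * norm Y" if "r \<in> {0..T}" for r and Y :: "real^'n^'n"
  proof -
    have "norm (F r ** Y) \<le> norm (F r) * norm Y * Kb" using Kb(2) by blast
    also have "\<dots> \<le> M * norm Y * Kb" using M(2)[OF that] Kb(1)
      by (intro mult_right_mono) auto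
    finally show ?thesis by (simp add: algebra_simps)
  qed
  have bndFT: "norm (Y ** transpose (F r)) \<le> (M * Kt * Kb) * norm Y" if "r \<in> {0..T}" for r and Y :: "real^'n^'n"
  proof -
    have "norm (Y ** transpose (F r)) \<le> norm Y * norm (transpose (F r)) * Kb" using Kb(2) by blast
    also have "\<dots> \<le> norm Y * (M * Kt) * Kb"
    proof -
      have "norm (transpose (F r)) \<le> M * Kt"
        using Kt(2)[of "F r"] M(2)[OF that] Kt(1) by (smt (verit) mult_right_mono)
      then show ?thesis using Kb(1) by (intro mult_right_mono mult_left_mono) auto
    qed
    finally show ?thesis by (simp add: algebra_simps)
  qed
  have coc: "Psi t 0 = Psi t s ** Psi s 0"
  proof -
    let ?Y = "\<lambda>r. Psi r 0 - Psi r s ** Psi s 0"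
    have "?Y t = 0"
    proof (rule lin_ode_zero[of T ?Y "\<lambda>r. F r ** ?Y r" "M * Kb" s t])
      fix r assume r: "r \<in> {0..T}"
      have d1: "((\<lambda>r. Psi r s ** Psi s 0) has_vector_derivative (F r ** Psi r s) ** Psi s 0) (at r within {0..T})"
        using bounded_linear.has_vector_derivative[OF bounded_bilinear.bounded_linear_left[OF bb_mm, where b="Psi s 0"] Psi_deriv[OF s_in r]]
        by simp
      have "(?Y has_vector_derivative F r ** Psi r 0 - (F r ** Psi r s) ** Psi s 0) (at r within {0..T})"
        by (rule has_vector_derivative_diff[OF Psi_deriv[OF z0 r] d1])
      moreover have "F r ** Psi r 0 - (F r ** Psi r s) ** Psi s 0 = F r ** ?Y r"
        by (simp add: mm_diff_l matrix_mul_assoc)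
      ultimately show "(?Y has_vector_derivative F r ** ?Y r) (at r within {0..T})" by simp
      show "norm (F r ** ?Y r) \<le> M * Kb * norm (?Y r)" by (rule bndF[OF r])
    next
      show "0 \<le> M * Kb" using M Kb by simp
      show "?Y s = 0" using Psi_init[OF s_in] by (simp add: matrix_mul_lid)
    qed (use s_in t_in in auto)
    then show ?thesis by simp
  qed
  have sym: "transpose (Sigma r) = Sigma r" if r: "r \<in> {0..T}" for r
  proof -
    let ?Z = "\<lambda>r. Sigma r - transpose (Sigma r)"
    have "?Z r = 0"
    proof (rule lin_ode_zero[of T ?Z "\<lambda>r. F r ** ?Z r + ?Z r ** transpose (F r)" "M * Kb + M * Kt * Kb" 0 r])
      fix r assume r: "r \<in> {0..T}"
      let ?D = "F r ** Sigma r + Sigma r ** transpose (F r) + G r ** transpose (G r)"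
      have "(?Z has_vector_derivative ?D - transpose ?D) (at r within {0..T})"
        by (rule has_vector_derivative_diff[OF Sigma_deriv[OF r]
              bounded_linear.has_vector_derivative[OF bl_tr Sigma_deriv[OF r]]])
      moreover have "?D - transpose ?D = F r ** ?Z r + ?Z r ** transpose (F r)"
        by (simp add: tr_add matrix_transpose_mul mm_diff_l mm_diff_r algebra_simps)
      ultimately show "(?Z has_vector_derivative F r ** ?Z r + ?Z r ** transpose (F r)) (at r within {0..T})"
        by simp
      have "norm (F r ** ?Z r + ?Z r ** transpose (F r)) \<le> norm (F r ** ?Z r) + norm (?Z r ** transpose (F r))"
        by (rule norm_triangle_ineq)
      also have "\<dots> \<le> (M * Kb) * norm (?Z r) + (M * Kt * Kb) * norm (?Z r)"
        using bndF[OF r] bndFT[OF r] by (rule add_mono)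
      finally show "norm (F r ** ?Z r + ?Z r ** transpose (F r)) \<le> (M * Kb + M * Kt * Kb) * norm (?Z r)"
        by (simp add: algebra_simps)
    next
      show "0 \<le> M * Kb + M * Kt * Kb" using M Kb Kt by simp
      show "?Z 0 = 0" using Sigma0_sym by simp
    qed (use z0 r in auto)
    then show ?thesis by simp
  qed
  have gt: "grad (\<lambda>v. ln (p t v)) u = matrix_inv (Sigma t) *v (Psi t 0 *v u0 - u)"
    unfolding p_def by (rule grad_gauss[OF inv_t sym[OF t_in]])
  have gs: "grad (\<lambda>v. ln (p s v)) us = matrix_inv (Sigma s) *v (Psi s 0 *v u0 - us)"
    unfolding p_def by (rule grad_gauss[OF inv_s sym[OF s_in]])
  have "Sigma s *v grad (\<lambda>v. ln (p s v)) us = Psi s 0 *v u0 - us"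
    unfolding gs matrix_vector_mul_assoc matrix_inv_props(1)[OF inv_s] by simp
  then have "Psi t s *v (Sigma s *v grad (\<lambda>v. ln (p s v)) us) = Psi t 0 *v u0 - Psi t s *v us"
    by (simp add: coc matrix_vector_mult_diff_distrib matrix_vector_mul_assoc)
  then show ?thesis
    unfolding gt by (simp add: matrix_vector_mult_diff_distrib[symmetric])
qed

end
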